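(* Let $Y\in\mathbb{R}$ be a random response and $\mathbf{X}\in\mathbb{R}^p$ a random predictor with mean $\bm{\mu}$ and positive definite covariance matrix $\bm{\Sigma}$, and suppose $$Y=f(\bm{\beta}_1^\top\mathbf{X},\dots,\bm{\beta}_K^\top\mathbf{X},\varepsilon),$$ where $f$ is an unknown function, $\mathbf{B}=[\bm{\beta}_1,\dots,\bm{\beta}_K]\in\mathbb{R}^{p\times K}$ has full column rank $K$, and $\varepsilon$ is an error independent of $\mathbf{X}$ with $E(\varepsilon)=0$. Let $\mathcal{S_B}=\mathrm{span}(\bm{\beta}_1,\dots,\bm{\beta}_K)$. Suppose that (i) (Linear Design Condition) for every $\bm{b}\in\mathbb{R}^p$ there are constants $a_0,a_1,\dots,a_K$ with $E(\bm{b}^\top\mathbf{X}\mid \bm{\beta}_1^\top\mathbf{X},\dots,\bm{\beta}_K^\top\mathbf{X})=a_0+\sum_{i=1}^K a_i\bm{\beta}_i^\top\mathbf{X}$; and (ii) $\mathrm{Var}(\mathbf{X}\mid\mathbf{B}^\top\mathbf{X})$ is constant (non-random). Then for any subrange $S$ of the range of $Y$ (with $P(Y\in S)>0$ and $\mathrm{Var}(\mathbf{X}\mid Y\in S)$ nonsingular), $$\left[\mathrm{Var}(\mathbf{X}\mid Y\in S)\right]^{-1}\mathrm{Cov}(\mathbf{X},Y\mid Y\in S)\in\mathcal{S_B}.$$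
   Context: $\mathrm{Cov}(\mathbf{X},Y\mid Y\in S)$ denotes the $p$-vector $E\{[Y-E(Y\mid Y\in S)][\mathbf{X}-E(\mathbf{X}\mid Y\in S)]\mid Y\in S\}$, i.e. the population OLS slope of $Y$ on $\mathbf{X}$ restricted to the event $Y\in S$ is $[\mathrm{Var}(\mathbf{X}\mid Y\in S)]^{-1}\mathrm{Cov}(\mathbf{X},Y\mid Y\in S)$. *)

theory Defs
  imports "HOL-Probability.Probability"
begin

definition cond_mean_event :: "'a measure \<Rightarrow> 'a set \<Rightarrow> ('a \<Rightarrow> real) \<Rightarrow> real" where
  "cond_mean_event M A Z = (\<integral>\<omega>. indicator A \<omega> * Z \<omega> \<partial>M) / measure M A"

definition cond_var_event :: "'a measure \<Rightarrow> 'a set \<Rightarrow> ('a \<Rightarrow> real^'p) \<Rightarrow> real^'p^'p" where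
  "cond_var_event M A X = (\<chi> i j. cond_mean_event M A
      (\<lambda>\<omega>. (X \<omega> $ i - cond_mean_event M A (\<lambda>\<omega>. X \<omega> $ i))
          * (X \<omega> $ j - cond_mean_event M A (\<lambda>\<omega>. X \<omega> $ j))))"

definition cond_cov_event :: "'a measure \<Rightarrow> 'a set \<Rightarrow> ('a \<Rightarrow> real^'p) \<Rightarrow> ('a \<Rightarrow> real) \<Rightarrow> real^'p" where
  "cond_cov_event M A X Y = (\<chi> i. cond_mean_event M A
      (\<lambda>\<omega>. (Y \<omega> - cond_mean_event M A Y) * (X \<omega> $ i - cond_mean_event M A (\<lambda>\<omega>. X \<omega> $ i))))"

definition mean_vec :: "'a measure \<Rightarrow> ('a \<Rightarrow> real^'p) \<Rightarrow> real^'p" where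
  "mean_vec M X = (\<chi> i. \<integral>\<omega>. X \<omega> $ i \<partial>M)"

definition cov_mat :: "'a measure \<Rightarrow> ('a \<Rightarrow> real^'p) \<Rightarrow> real^'p^'p" where
  "cov_mat M X = (\<chi> i j. \<integral>\<omega>. (X \<omega> $ i - mean_vec M X $ i) * (X \<omega> $ j - mean_vec M X $ j) \<partial>M)"

definition pos_def_mat :: "real^'p^'p \<Rightarrow> bool" where
  "pos_def_mat S \<longleftrightarrow> transpose S = S \<and> (\<forall>v. v \<noteq> 0 \<longrightarrow> v \<bullet> (S *v v) > 0)"

definition gen_sigma :: "'a measure \<Rightarrow> ('a \<Rightarrow> 'b::topological_space) \<Rightarrow> 'a measure" where
  "gen_sigma M Z = vimage_algebra (space M) Z borel"

text \<open>Independence of two random variables with possibly different (Borel) codomains: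
  P(X \<in> A, Z \<in> C) = P(X \<in> A) P(Z \<in> C) for all Borel sets A, C.
  (The library's indep_var needs both variables to share one codomain type.)\<close>
definition indep_rvs :: "'a measure \<Rightarrow> ('a \<Rightarrow> 'b::topological_space) \<Rightarrow> ('a \<Rightarrow> 'c::topological_space) \<Rightarrow> bool" where
  "indep_rvs M X Z \<longleftrightarrow> (\<forall>A \<in> sets borel. \<forall>C \<in> sets borel.
     measure M (X -` A \<inter> Z -` C \<inter> space M) = measure M (X -` A \<inter> space M) * measure M (Z -` C \<inter> space M))"

end

theory Submission
  imports Defs
begin


lemma gen_sigma_sub:
  assumes "prob_space M" and Zm: "Z \<in> borel_measurable M"
  shows "sigma_finite_subalgebra M (gen_sigma M Z)"
proof (rule finite_measure_subalgebra_is_sigma_finite)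
  interpret prob_space M by fact
  have "subalgebra M (gen_sigma M Z)"
    unfolding subalgebra_def gen_sigma_def
    using Zm by (auto simp: sets_vimage_algebra2 measurable_space measurable_sets)
  then show "finite_measure_subalgebra M (gen_sigma M Z)"
    unfolding finite_measure_subalgebra_def finite_measure_subalgebra_axioms_def
    by (simp add: finite_measure_axioms)
qed

lemma ce_zero:
  fixes Z :: "'a \<Rightarrow> 'b::topological_space" and R :: "'a \<Rightarrow> real"
  assumes "prob_space M" and Zm: "Z \<in> borel_measurable M" and Rm: "R \<in> borel_measurable M"
    and ce: "AE \<omega> in M. real_cond_exp M (gen_sigma M Z) R \<omega> = 0"
    and phim: "\<phi> \<in> borel_measurable borel"
    and int: "integrable M (\<lambda>\<omega>. \<phi> (Z \<omega>) * R \<omega>)"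
  shows "(\<integral>\<omega>. \<phi> (Z \<omega>) * R \<omega> \<partial>M) = 0"
proof -
  interpret sigma_finite_subalgebra M "gen_sigma M Z" using gen_sigma_sub assms by blast
  have "(\<lambda>\<omega>. \<phi> (Z \<omega>)) \<in> borel_measurable (gen_sigma M Z)"
    unfolding gen_sigma_def
    apply (rule measurable_compose[OF measurable_vimage_algebra1 phim])
    using Zm by (auto simp: measurable_space)
  from real_cond_exp_intg(2)[OF int this Rm]
  have "(\<integral>\<omega>. \<phi> (Z \<omega>) * R \<omega> \<partial>M) = (\<integral>\<omega>. \<phi> (Z \<omega>) * real_cond_exp M (gen_sigma M Z) R \<omega> \<partial>M)" by simp
  also have "\<dots> = 0"
    by (rule integral_eq_zero_AE) (use ce in auto)
  finally show ?thesis .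
qed

lemma indep_zero:
  fixes X :: "'a \<Rightarrow> 'b::second_countable_topology" and \<epsilon> :: "'a \<Rightarrow> real"
    and T :: "'b \<Rightarrow> 'c::second_countable_topology" and r :: "'b \<Rightarrow> real"
    and g :: "'c \<times> real \<Rightarrow> real"
  assumes P: "prob_space M" and Xm[measurable]: "X \<in> borel_measurable M"
    and em[measurable]: "\<epsilon> \<in> borel_measurable M"
    and ind: "indep_rvs M X \<epsilon>"
    and Tm[measurable]: "T \<in> borel_measurable borel" and rm[measurable]: "r \<in> borel_measurable borel"
    and ce: "AE \<omega> in M. real_cond_exp M (gen_sigma M (\<lambda>\<omega>. T (X \<omega>))) (\<lambda>\<omega>. r (X \<omega>)) \<omega> = 0"
    and gm: "g \<in> borel_measurable borel"
    and int: "integrable M (\<lambda>\<omega>. r (X \<omega>) * g (T (X \<omega>), \<epsilon> \<omega>))"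
  shows "(\<integral>\<omega>. r (X \<omega>) * g (T (X \<omega>), \<epsilon> \<omega>) \<partial>M) = 0"
proof -
  interpret prob_space M by fact
  have gm'[measurable]: "g \<in> borel_measurable (borel \<Otimes>\<^sub>M borel)" by (simp add: borel_prod gm)
  define c :: 'b where "c = undefined"
  define E' where "E' = (\<lambda>\<omega>. (c, \<epsilon> \<omega>))"
  define X' where "X' = (\<lambda>\<omega>. (X \<omega>, 0::real))"
  have E'm[measurable]: "E' \<in> borel_measurable M" unfolding E'_def by measurable
  have X'm[measurable]: "X' \<in> borel_measurable M" unfolding X'_def by measurable
  have "indep_set {E' -` A \<inter> space M | A. A \<in> sets borel} {X' -` A \<inter> space M | A. A \<in> sets borel}"
    unfolding indep_sets2_eq
  proof (intro conjI ballI)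
    fix a b assume "a \<in> {E' -` A \<inter> space M | A. A \<in> sets borel}" "b \<in> {X' -` A \<inter> space M | A. A \<in> sets borel}"
    then obtain A C where AC: "A \<in> sets borel" "C \<in> sets borel" "a = E' -` A \<inter> space M" "b = X' -` C \<inter> space M"
      by auto
    have pm1: "Pair c \<in> borel_measurable (borel :: real measure)"
      by (simp add: borel_prod[symmetric])
    have pm2: "(\<lambda>x. (x, 0::real)) \<in> borel_measurable (borel :: 'b measure)"
      by (simp add: borel_prod[symmetric])
    define A' where "A' = Pair c -` A"
    define C' where "C' = (\<lambda>x. (x, 0::real)) -` C"
    have A'b: "A' \<in> sets borel" unfolding A'_def using measurable_sets[OF pm1 AC(1)] by simp
    have C'b: "C' \<in> sets borel" unfolding C'_def using measurable_sets[OF pm2 AC(2)] by simp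
    have a: "a = \<epsilon> -` A' \<inter> space M" and b: "b = X -` C' \<inter> space M"
      using AC unfolding A'_def C'_def E'_def X'_def by auto
    have "X -` C' \<inter> \<epsilon> -` A' \<inter> space M = (\<epsilon> -` A' \<inter> space M) \<inter> (X -` C' \<inter> space M)" by auto
    then show "prob (a \<inter> b) = prob a * prob b"
      using ind A'b C'b unfolding indep_rvs_def a b by (metis mult.commute)
  qed (auto simp: measurable_sets)
  then have iv: "indep_var borel E' borel X'"
    unfolding indep_var_def indep_vars_def2 indep_set_def
    apply (intro conjI)
    subgoal by (auto split: bool.split)
    apply (rule back_subst[of "\<lambda>F. indep_sets F UNIV"], assumption)
    by (rule ext) (auto split: bool.split)
  define PX where "PX = distr M (borel \<Otimes>\<^sub>M borel) X'"
  define PE where "PE = distr M (borel \<Otimes>\<^sub>M borel) E'"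
  note iv' = iv[unfolded borel_prod[symmetric]]
  have dist: "PE \<Otimes>\<^sub>M PX = distr M ((borel \<Otimes>\<^sub>M borel) \<Otimes>\<^sub>M (borel \<Otimes>\<^sub>M borel)) (\<lambda>\<omega>. (E' \<omega>, X' \<omega>))"
  proof -
    have "X' \<in> M \<rightarrow>\<^sub>M borel \<Otimes>\<^sub>M borel" "E' \<in> M \<rightarrow>\<^sub>M borel \<Otimes>\<^sub>M borel"
      unfolding X'_def E'_def by (auto intro!: measurable_Pair)
    then show ?thesis using iv' unfolding indep_var_distribution_eq PX_def PE_def by simp
  qed
  interpret PX: prob_space PX unfolding PX_def by (rule prob_space_distr) (auto simp: X'_def intro!: measurable_Pair)
  interpret PE: prob_space PE unfolding PE_def by (rule prob_space_distr) (auto simp: E'_def intro!: measurable_Pair)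
  interpret pair_sigma_finite PE PX
    unfolding pair_sigma_finite_def using PX.sigma_finite_measure_axioms PE.sigma_finite_measure_axioms by simp
  define h :: "('b \<times> real) \<times> ('b \<times> real) \<Rightarrow> real" where "h = (\<lambda>(e, x). r (fst x) * g (T (fst x), snd e))"
  have hm[measurable]: "h \<in> borel_measurable ((borel \<Otimes>\<^sub>M borel) \<Otimes>\<^sub>M (borel \<Otimes>\<^sub>M borel))" unfolding h_def by measurable
  have hint: "integrable (PE \<Otimes>\<^sub>M PX) h"
    unfolding dist by (subst integrable_distr_eq) (use int in \<open>auto simp: h_def E'_def X'_def\<close>)
  have "(\<integral>\<omega>. r (X \<omega>) * g (T (X \<omega>), \<epsilon> \<omega>) \<partial>M) = integral\<^sup>L (PE \<Otimes>\<^sub>M PX) h"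
    unfolding dist by (subst integral_distr) (auto simp: h_def E'_def X'_def)
  also have "\<dots> = (\<integral>e. (\<integral>x. h (e, x) \<partial>PX) \<partial>PE)"
    using integral_fst'[OF hint] by simp
  also have "\<dots> = 0"
  proof (rule integral_eq_zero_AE)
    show "AE e in PE. (\<integral>x. h (e, x) \<partial>PX) = 0"
      using AE_integrable_fst'[OF hint]
    proof eventually_elim
      case (elim e)
      have i1: "integrable M (\<lambda>\<omega>. g (T (X \<omega>), snd e) * r (X \<omega>))"
        using elim unfolding PX_def h_def
        by (subst (asm) integrable_distr_eq) (auto simp: mult.commute X'_def split: prod.splits)
      have "(\<integral>x. h (e, x) \<partial>PX) = (\<integral>\<omega>. g (T (X \<omega>), snd e) * r (X \<omega>) \<partial>M)"
        unfolding PX_def h_def by (subst integral_distr) (auto simp: mult.commute X'_def split: prod.splits)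
      also have "\<dots> = 0"
        by (rule ce_zero[OF P _ _ ce _ i1]) auto
      finally show ?case .
    qed
  qed
  finally show ?thesis .
qed



definition iA :: "'a measure \<Rightarrow> 'a set \<Rightarrow> ('a \<Rightarrow> real) \<Rightarrow> bool" where
  "iA M A f \<longleftrightarrow> integrable M (\<lambda>\<omega>. indicator A \<omega> * f \<omega>)"

lemma iA_add: "iA M A f \<Longrightarrow> iA M A g \<Longrightarrow> iA M A (\<lambda>\<omega>. f \<omega> + g \<omega>)"
  unfolding iA_def by (simp add: distrib_left)
lemma iA_diff: "iA M A f \<Longrightarrow> iA M A g \<Longrightarrow> iA M A (\<lambda>\<omega>. f \<omega> - g \<omega>)"
  unfolding iA_def by (simp add: right_diff_distrib)
lemma iA_cmult: "iA M A f \<Longrightarrow> iA M A (\<lambda>\<omega>. c * f \<omega>)"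
  unfolding iA_def by (simp add: mult.left_commute[of _ c])
lemma iA_sum: "(\<And>j. j \<in> J \<Longrightarrow> iA M A (f j)) \<Longrightarrow> iA M A (\<lambda>\<omega>. \<Sum>j\<in>J. f j \<omega>)"
  unfolding iA_def by (simp add: sum_distrib_left)

lemma iA_cong: "iA M A f \<Longrightarrow> (\<And>\<omega>. f \<omega> = g \<omega>) \<Longrightarrow> iA M A g"
  by (metis ext)

lemma En_add: "iA M A f \<Longrightarrow> iA M A g \<Longrightarrow>
  cond_mean_event M A (\<lambda>\<omega>. f \<omega> + g \<omega>) = cond_mean_event M A f + cond_mean_event M A g"
  unfolding iA_def cond_mean_event_def by (simp add: distrib_left add_divide_distrib)
lemma En_diff: "iA M A f \<Longrightarrow> iA M A g \<Longrightarrow>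
  cond_mean_event M A (\<lambda>\<omega>. f \<omega> - g \<omega>) = cond_mean_event M A f - cond_mean_event M A g"
  unfolding iA_def cond_mean_event_def by (simp add: right_diff_distrib diff_divide_distrib)
lemma En_cmult: "cond_mean_event M A (\<lambda>\<omega>. c * f \<omega>) = c * cond_mean_event M A f"
  unfolding cond_mean_event_def by (simp add: mult.left_commute[of _ c])
lemma En_sum: "finite J \<Longrightarrow> (\<And>j. j \<in> J \<Longrightarrow> iA M A (f j)) \<Longrightarrow>
  cond_mean_event M A (\<lambda>\<omega>. \<Sum>j\<in>J. f j \<omega>) = (\<Sum>j\<in>J. cond_mean_event M A (f j))"
  unfolding iA_def cond_mean_event_def
  by (simp only: sum_distrib_left sum_divide_distrib[symmetric]) (subst Bochner_Integration.integral_sum[where f="\<lambda>j \<omega>. indicator A \<omega> * f j \<omega>"], auto)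
lemma En_const: "A \<in> sets M \<Longrightarrow> measure M A > 0 \<Longrightarrow> cond_mean_event M A (\<lambda>\<omega>. c) = c"
  unfolding cond_mean_event_def
  by (simp add: Int_absorb2 sets.sets_into_space)
lemma En_nonneg: "(\<And>\<omega>. f \<omega> \<ge> 0) \<Longrightarrow> cond_mean_event M A f \<ge> 0"
  unfolding cond_mean_event_def by (auto intro!: divide_nonneg_nonneg integral_nonneg_AE)
lemma En_cong: "(\<And>\<omega>. \<omega> \<in> space M \<Longrightarrow> f \<omega> = g \<omega>) \<Longrightarrow> cond_mean_event M A f = cond_mean_event M A g"
  unfolding cond_mean_event_def by (simp cong: Bochner_Integration.integral_cong)



lemma inner_mv_transpose:
  fixes M :: "real^'n^'m"
  shows "a \<bullet> (M *v b) = (transpose M *v a) \<bullet> b"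
proof -
  have "a \<bullet> (M *v b) = (\<Sum>i\<in>UNIV. \<Sum>j\<in>UNIV. a$i * M$i$j * b$j)"
    by (simp add: inner_vec_def matrix_vector_mult_def sum_distrib_left mult_ac)
  also have "\<dots> = (\<Sum>j\<in>UNIV. \<Sum>i\<in>UNIV. a$i * M$i$j * b$j)" by (rule sum.swap)
  also have "\<dots> = (transpose M *v a) \<bullet> b"
    by (simp add: inner_vec_def matrix_vector_mult_def transpose_def sum_distrib_left mult_ac)
  finally show ?thesis .
qed

lemma transpose_mv_nth:
  fixes B :: "real^'k^'p"
  shows "(transpose B *v z) $ k = column k B \<bullet> z"
  unfolding inner_vec_def matrix_vector_mult_def transpose_def column_def
  by simp

lemma sym_inner:
  fixes V :: "real^'n^'n"
  assumes "transpose V = V"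
  shows "x \<bullet> (V *v y) = y \<bullet> (V *v x)"
  by (metis assms inner_commute inner_mv_transpose)

lemma matrix_inv_left:
  fixes V :: "real^'n^'n"
  assumes "invertible V"
  shows "matrix_inv V ** V = mat 1"
  using assms unfolding invertible_def matrix_inv_def by (metis (mono_tags, lifting) someI_ex)

lemma psd_zero:
  fixes V :: "real^'n^'n"
  assumes sym: "transpose V = V" and psd: "\<And>v. v \<bullet> (V *v v) \<ge> 0" and z: "x \<bullet> (V *v x) = 0"
  shows "V *v x = 0"
proof -
  define y where "y = V *v x"
  define a where "a = y \<bullet> y"
  define b where "b = y \<bullet> (V *v y)"
  have b0: "b \<ge> 0" using psd b_def by simp
  have quad: "0 \<le> 2 * t * a + t^2 * b" for t :: real
  proof -
    have "0 \<le> (x + t *\<^sub>R y) \<bullet> (V *v (x + t *\<^sub>R y))" by (rule psd)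
    also have "\<dots> = x \<bullet> (V *v x) + t * (x \<bullet> (V *v y)) + t * (y \<bullet> (V *v x)) + t^2 * b"
      by (simp add: matrix_vector_right_distrib matrix_vector_mult_scaleR inner_add_left inner_add_right
           b_def power2_eq_square algebra_simps)
    also have "\<dots> = 2 * t * a + t^2 * b"
      using z sym_inner[OF sym, of x y] by (simp add: a_def y_def)
    finally show ?thesis .
  qed
  have "a = 0"
  proof (rule ccontr)
    assume "a \<noteq> 0"
    then have ap: "a > 0" unfolding a_def by simp
    define t where "t = - a / (b + 1)"
    have "2 * t * a + t^2 * b = a^2 * (b - 2 * (b + 1)) / (b + 1)^2"
      unfolding t_def using b0
      apply (subgoal_tac "b + 1 \<noteq> 0")
       apply (simp add: divide_simps power2_eq_square)
       apply algebra
      by simp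
    also have "\<dots> < 0" using ap b0
      by (intro divide_neg_pos mult_pos_neg) auto
    finally show False using quad[of t] by simp
  qed
  then show ?thesis unfolding a_def y_def by simp
qed

lemma linalg:
  fixes V :: "real^'p^'p" and C :: "real^'p" and B :: "real^'k^'p" and D :: "real^'k^'p"
    and q :: "'p \<Rightarrow> real^'p"
  assumes invV: "invertible V" and sym: "transpose V = V" and psd: "\<And>v. v \<bullet> (V *v v) \<ge> 0"
    and rk: "rank B = CARD('k)"
    and q_def: "\<And>i. q i = axis i 1 - (\<Sum>k\<in>UNIV. D $ i $ k *\<^sub>R column k B)"
    and N1: "\<And>i l. q i \<bullet> (V *v column l B) = 0"
    and N2: "\<And>i. q i \<bullet> C = 0"
  shows "matrix_inv V *v C \<in> span (columns B)"
proof -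
  define W where "W = transpose B ** V ** B"
  have Wv: "W *v u = transpose B *v (V *v (B *v u))" for u
    unfolding W_def by (simp add: matrix_vector_mul_assoc[symmetric] matrix_mul_assoc)
  have injB: "inj ((*v) B)" using rk full_rank_injective by blast
  have injV: "inj ((*v) V)" using invV inj_matrix_vector_mult by blast
  have "\<forall>u. W *v u = 0 \<longrightarrow> u = 0"
  proof (intro allI impI)
    fix u assume "W *v u = 0"
    then have "u \<bullet> (W *v u) = 0" by simp
    then have "(B *v u) \<bullet> (V *v (B *v u)) = 0"
      unfolding Wv by (metis inner_commute inner_mv_transpose)
    then have "V *v (B *v u) = 0" by (rule psd_zero[OF sym psd])
    then have "B *v u = 0" using injV by (metis inj_eq matrix_vector_mult_0_right)
    then show "u = 0" using injB by (metis inj_eq matrix_vector_mult_0_right)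
  qed
  then have "invertible W"
    using matrix_left_invertible_ker invertible_left_inverse by blast
  then obtain W' where W': "W ** W' = mat 1" unfolding invertible_def by blast
  define u0 where "u0 = W' *v (transpose B *v C)"
  have Wu0: "W *v u0 = transpose B *v C"
    unfolding u0_def by (simp add: matrix_vector_mul_assoc W')
  have key: "V *v (B *v u0) = C"
  proof (subst vec_eq_iff, intro allI)
    fix i
    let ?z = "V *v (B *v u0)"
    have qz: "q i \<bullet> ?z = 0"
    proof -
      have "q i \<bullet> ?z = (transpose V *v q i) \<bullet> (B *v u0)" by (rule inner_mv_transpose)
      also have "\<dots> = (transpose B *v (V *v q i)) \<bullet> u0"
        using sym by (simp add: inner_mv_transpose)
      also have "transpose B *v (V *v q i) = 0"
      proof (subst vec_eq_iff, intro allI)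
        fix l
        show "(transpose B *v (V *v q i)) $ l = 0 $ l"
          using N1[of i l] sym_inner[OF sym, of "column l B" "q i"] by (simp only: transpose_mv_nth) simp
      qed
      finally show ?thesis by simp
    qed
    have bz: "column k B \<bullet> ?z = column k B \<bullet> C" for k
      using arg_cong[OF Wu0, of "\<lambda>v. v $ k"] unfolding Wv by (simp only: transpose_mv_nth)
    have ax: "axis i 1 = q i + (\<Sum>k\<in>UNIV. D $ i $ k *\<^sub>R column k B)" using q_def[of i] by simp
    have "?z $ i = axis i 1 \<bullet> ?z" by (simp add: inner_axis')
    also have "\<dots> = (\<Sum>k\<in>UNIV. D $ i $ k * (column k B \<bullet> ?z))"
      unfolding ax by (simp add: inner_add_left inner_sum_left qz)
    also have "\<dots> = (\<Sum>k\<in>UNIV. D $ i $ k * (column k B \<bullet> C))" using bz by simp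
    also have "\<dots> = axis i 1 \<bullet> C"
      unfolding ax by (simp add: inner_add_left inner_sum_left N2)
    also have "\<dots> = C $ i" by (simp add: inner_axis')
    finally show "?z $ i = C $ i" .
  qed
  have "matrix_inv V *v C = B *v u0"
    using key matrix_inv_left[OF invV]
    by (metis matrix_vector_mul_assoc matrix_vector_mul_lid)
  then show ?thesis by (simp add: matrix_vector_mult_in_columnspace)
qed



lemma iA_lin:
  fixes X :: "'a \<Rightarrow> real^'p"
  assumes i1: "iA M A (\<lambda>_. 1)" and iX: "\<And>j. iA M A (\<lambda>\<omega>. X \<omega> $ j)"
  shows "iA M A (\<lambda>\<omega>. c + v \<bullet> X \<omega>)"
proof -
  have "iA M A (\<lambda>\<omega>. c * 1 + (\<Sum>j\<in>UNIV. v $ j * X \<omega> $ j))"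
    by (intro iA_add iA_cmult iA_sum i1 iX)
  then show ?thesis by (rule iA_cong) (simp add: inner_vec_def)
qed

lemma iA_linlin:
  fixes X :: "'a \<Rightarrow> real^'p"
  assumes i1: "iA M A (\<lambda>_. 1)" and iX: "\<And>j. iA M A (\<lambda>\<omega>. X \<omega> $ j)"
    and iXX: "\<And>j l. iA M A (\<lambda>\<omega>. X \<omega> $ j * X \<omega> $ l)"
  shows "iA M A (\<lambda>\<omega>. (c + v \<bullet> X \<omega>) * (d + w \<bullet> X \<omega>))"
proof -
  have "iA M A (\<lambda>\<omega>. (c * d) * 1 + (\<Sum>l\<in>UNIV. (c * w $ l) * X \<omega> $ l) + (\<Sum>j\<in>UNIV. (d * v $ j) * X \<omega> $ j)
      + (\<Sum>j\<in>UNIV. \<Sum>l\<in>UNIV. (v $ j * w $ l) * (X \<omega> $ j * X \<omega> $ l)))"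
    by (intro iA_add iA_cmult iA_sum i1 iX iXX)
  moreover have "(c * d) * 1 + (\<Sum>l\<in>UNIV. (c * w $ l) * x $ l) + (\<Sum>j\<in>UNIV. (d * v $ j) * x $ j)
      + (\<Sum>j\<in>UNIV. \<Sum>l\<in>UNIV. (v $ j * w $ l) * (x $ j * x $ l)) = (c + v \<bullet> x) * (d + w \<bullet> x)" for x :: "real^'p"
  proof -
    have e1: "(c + v \<bullet> x) * (d + w \<bullet> x) = c*d + c*(w \<bullet> x) + d*(v \<bullet> x) + (v \<bullet> x)*(w \<bullet> x)"
      by (simp add: distrib_left distrib_right mult.commute)
    have e2: "(v \<bullet> x)*(w \<bullet> x) = (\<Sum>j\<in>UNIV. \<Sum>l\<in>UNIV. (v $ j * w $ l) * (x $ j * x $ l))"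
      unfolding inner_vec_def sum_product by (simp add: mult_ac)
    have e3: "c*(w \<bullet> x) = (\<Sum>l\<in>UNIV. (c * w $ l) * x $ l)"
      unfolding inner_vec_def sum_distrib_left by (simp add: mult_ac)
    have e4: "d*(v \<bullet> x) = (\<Sum>l\<in>UNIV. (d * v $ l) * x $ l)"
      unfolding inner_vec_def sum_distrib_left by (simp add: mult_ac)
    show ?thesis unfolding e1 e2 e3 e4 by simp
  qed
  ultimately show ?thesis by (rule iA_cong)
qed

lemma iA_linY:
  fixes X :: "'a \<Rightarrow> real^'p"
  assumes i1: "iA M A (\<lambda>_. 1)" and iX: "\<And>j. iA M A (\<lambda>\<omega>. X \<omega> $ j)"
    and iY: "iA M A Y" and iYX: "\<And>j. iA M A (\<lambda>\<omega>. Y \<omega> * X \<omega> $ j)"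
  shows "iA M A (\<lambda>\<omega>. (c + v \<bullet> X \<omega>) * (d + e * Y \<omega>))"
proof -
  have "iA M A (\<lambda>\<omega>. (c * d) * 1 + (c * e) * Y \<omega> + (\<Sum>j\<in>UNIV. (d * v $ j) * X \<omega> $ j)
      + (\<Sum>j\<in>UNIV. (e * v $ j) * (Y \<omega> * X \<omega> $ j)))"
    by (intro iA_add iA_cmult iA_sum i1 iX iY iYX)
  moreover have "(c * d) * 1 + (c * e) * Y \<omega> + (\<Sum>j\<in>UNIV. (d * v $ j) * X \<omega> $ j)
      + (\<Sum>j\<in>UNIV. (e * v $ j) * (Y \<omega> * X \<omega> $ j)) = (c + v \<bullet> X \<omega>) * (d + e * Y \<omega>)" for \<omega>
  proof -
    have e1: "(c + v \<bullet> X \<omega>) * (d + e * Y \<omega>) = c*d + c*e*Y \<omega> + d*(v \<bullet> X \<omega>) + (e * Y \<omega>)*(v \<bullet> X \<omega>)"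
      by (simp add: distrib_left distrib_right mult.commute mult.left_commute)
    have e3: "(e * Y \<omega>)*(v \<bullet> X \<omega>) = (\<Sum>l\<in>UNIV. (e * v $ l) * (Y \<omega> * X \<omega> $ l))"
      unfolding inner_vec_def sum_distrib_left by (simp add: mult_ac)
    have e4: "d*(v \<bullet> X \<omega>) = (\<Sum>l\<in>UNIV. (d * v $ l) * X \<omega> $ l)"
      unfolding inner_vec_def sum_distrib_left by (simp add: mult_ac)
    show ?thesis unfolding e1 e3 e4 by simp
  qed
  ultimately show ?thesis by (rule iA_cong)
qed



theorem lemma1:
  fixes M :: "'a measure"
    and X :: "'a \<Rightarrow> real^('p::finite)" and Y :: "'a \<Rightarrow> real" and \<epsilon> :: "'a \<Rightarrow> real"
    and f :: "(real^('k::finite)) \<times> real \<Rightarrow> real"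
    and B :: "real^'k^'p"
    and S :: "real set"
  assumes "prob_space M"
    and X_meas: "X \<in> borel_measurable M"
    and eps_meas: "\<epsilon> \<in> borel_measurable M"
    and X_sq: "\<And>i. integrable M (\<lambda>\<omega>. (X \<omega> $ i)\<^sup>2)"
    and Sigma_pd: "pos_def_mat (cov_mat M X)"
    and f_meas: "f \<in> borel_measurable borel"
    and model: "\<And>\<omega>. \<omega> \<in> space M \<Longrightarrow> Y \<omega> = f (transpose B *v X \<omega>, \<epsilon> \<omega>)"
    and B_rank: "rank B = CARD('k)"
    and indep: "indep_rvs M X \<epsilon>"
    and eps_int: "integrable M \<epsilon>"
    and eps_mean: "(\<integral>\<omega>. \<epsilon> \<omega> \<partial>M) = 0"
    and LDC: "\<And>b. \<exists>a0 (a :: real^'k). AE \<omega> in M.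
        real_cond_exp M (gen_sigma M (\<lambda>\<omega>. transpose B *v X \<omega>)) (\<lambda>\<omega>. b \<bullet> X \<omega>) \<omega>
          = a0 + (\<Sum>i\<in>UNIV. a $ i * (column i B \<bullet> X \<omega>))"
    and CCV: "\<exists>V :: real^'p^'p. \<forall>i j. AE \<omega> in M.
        real_cond_exp M (gen_sigma M (\<lambda>\<omega>. transpose B *v X \<omega>))
          (\<lambda>\<omega>. (X \<omega> $ i - real_cond_exp M (gen_sigma M (\<lambda>\<omega>. transpose B *v X \<omega>)) (\<lambda>\<omega>. X \<omega> $ i) \<omega>)
              * (X \<omega> $ j - real_cond_exp M (gen_sigma M (\<lambda>\<omega>. transpose B *v X \<omega>)) (\<lambda>\<omega>. X \<omega> $ j) \<omega>)) \<omega>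
          = V $ i $ j"
    and S_borel: "S \<in> sets borel"
    and S_pos: "measure M (Y -` S \<inter> space M) > 0"
    and Y_int_S: "integrable M (\<lambda>\<omega>. indicator (Y -` S \<inter> space M) \<omega> * Y \<omega>)"
    and XY_int_S: "\<And>i. integrable M (\<lambda>\<omega>. indicator (Y -` S \<inter> space M) \<omega> * (Y \<omega> * X \<omega> $ i))"
    and V_S_inv: "invertible (cond_var_event M (Y -` S \<inter> space M) X)"
  shows "matrix_inv (cond_var_event M (Y -` S \<inter> space M) X)
           *v cond_cov_event M (Y -` S \<inter> space M) X Y \<in> span (columns B)"
proof -
  interpret prob_space M by fact
  define A where "A = Y -` S \<inter> space M"
  define T where "T = (\<lambda>x::real^'p. transpose B *v x)"
  define F where "F = gen_sigma M (\<lambda>\<omega>. transpose B *v X \<omega>)"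
  have Tm[measurable]: "T \<in> borel_measurable borel"
    unfolding T_def by (intro borel_measurable_continuous_onI matrix_vector_mult_linear_continuous_on)
  have nthm[measurable]: "(\<lambda>x::real^'p. x $ j) \<in> borel_measurable borel" for j
    by (intro borel_measurable_continuous_onI continuous_on_component continuous_on_id)
  have nthmk[measurable]: "(\<lambda>x::real^'k. x $ j) \<in> borel_measurable borel" for j
    by (intro borel_measurable_continuous_onI continuous_on_component continuous_on_id)
  have Xm'[measurable]: "(\<lambda>\<omega>. X \<omega> $ j) \<in> borel_measurable M" for j
    using measurable_compose[OF X_meas nthm] .
  have fm[measurable]: "f \<in> borel_measurable (borel \<Otimes>\<^sub>M borel)" using f_meas by (simp add: borel_prod)
  have Ym[measurable]: "Y \<in> borel_measurable M"
  proof -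
    have "(\<lambda>\<omega>. f (T (X \<omega>), \<epsilon> \<omega>)) \<in> borel_measurable M" using X_meas eps_meas by measurable
    then show ?thesis by (rule measurable_cong[THEN iffD1, rotated]) (simp add: model T_def)
  qed
  have Asets: "A \<in> sets M" unfolding A_def using Ym S_borel by (simp add: measurable_sets)
  have Apos: "measure M A > 0" using S_pos unfolding A_def .
  have intX: "integrable M (\<lambda>\<omega>. X \<omega> $ j)" for j
    by (rule square_integrable_imp_integrable[OF _ X_sq]) simp
  have intXX: "integrable M (\<lambda>\<omega>. X \<omega> $ j * X \<omega> $ l)" for j l
  proof (rule Bochner_Integration.integrable_bound[of _ "\<lambda>\<omega>. (X \<omega> $ j)\<^sup>2 + (X \<omega> $ l)\<^sup>2"])
    show "integrable M (\<lambda>\<omega>. (X \<omega> $ j)\<^sup>2 + (X \<omega> $ l)\<^sup>2)" using X_sq by simp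
    show "(\<lambda>\<omega>. X \<omega> $ j * X \<omega> $ l) \<in> borel_measurable M" by measurable
    have "norm (a * b) \<le> norm (a\<^sup>2 + b\<^sup>2)" for a b :: real
    proof -
      have "0 \<le> (\<bar>a\<bar> - \<bar>b\<bar>)\<^sup>2" by simp
      then have "2 * (\<bar>a\<bar> * \<bar>b\<bar>) \<le> a\<^sup>2 + b\<^sup>2" by (simp add: power2_eq_square algebra_simps)
      moreover have "0 \<le> \<bar>a\<bar> * \<bar>b\<bar>" by simp
      ultimately have "\<bar>a\<bar> * \<bar>b\<bar> \<le> a\<^sup>2 + b\<^sup>2" by linarith
      then show ?thesis by (simp add: abs_mult)
    qed
    then show "AE \<omega> in M. norm (X \<omega> $ j * X \<omega> $ l) \<le> norm ((X \<omega> $ j)\<^sup>2 + (X \<omega> $ l)\<^sup>2)" by simp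
  qed
  have i1: "iA M A (\<lambda>_. 1)" unfolding iA_def using Asets by (auto intro!: integrable_real_indicator simp: emeasure_eq_measure)
  have iX: "iA M A (\<lambda>\<omega>. X \<omega> $ j)" for j
    unfolding iA_def using integrable_mult_indicator[OF Asets intX[of j]] by simp
  have iXX: "iA M A (\<lambda>\<omega>. X \<omega> $ j * X \<omega> $ l)" for j l
    unfolding iA_def using integrable_mult_indicator[OF Asets intXX[of j l]] by simp
  have iY: "iA M A Y" unfolding iA_def A_def using Y_int_S .
  have iYX: "iA M A (\<lambda>\<omega>. Y \<omega> * X \<omega> $ j)" for j unfolding iA_def A_def using XY_int_S .
  note iLL = iA_linlin[OF i1 iX iXX]
  note iLY = iA_linY[OF i1 iX iY iYX]
  note iL = iA_lin[OF i1 iX]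
  have intL: "integrable M (\<lambda>\<omega>. c + v \<bullet> X \<omega>)" for c v
  proof -
    have "integrable M (\<lambda>\<omega>. c + (\<Sum>j\<in>UNIV. v $ j * X \<omega> $ j))"
      using intX by (intro Bochner_Integration.integrable_add Bochner_Integration.integrable_sum
          integrable_mult_right) auto
    then show ?thesis by (simp add: inner_vec_def)
  qed
  have colT: "column k B \<bullet> x = T x $ k" for k x unfolding T_def by (simp only: transpose_mv_nth)
  have ex: "\<exists>a0 (a :: real^'k). AE \<omega> in M.
        real_cond_exp M F (\<lambda>\<omega>. axis i 1 \<bullet> X \<omega>) \<omega>
          = a0 + (\<Sum>k\<in>UNIV. a $ k * (column k B \<bullet> X \<omega>))" for i
    unfolding F_def by (rule LDC)
  define a0 where "a0 = (\<lambda>i. SOME a0. \<exists>(a :: real^'k). AE \<omega> in M.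
        real_cond_exp M F (\<lambda>\<omega>. axis i 1 \<bullet> X \<omega>) \<omega>
          = a0 + (\<Sum>k\<in>UNIV. a $ k * (column k B \<bullet> X \<omega>)))"
  define a where "a = (\<lambda>i. SOME (a :: real^'k). AE \<omega> in M.
        real_cond_exp M F (\<lambda>\<omega>. axis i 1 \<bullet> X \<omega>) \<omega>
          = a0 i + (\<Sum>k\<in>UNIV. a $ k * (column k B \<bullet> X \<omega>)))"
  have LDC': "AE \<omega> in M. real_cond_exp M F (\<lambda>\<omega>. axis i 1 \<bullet> X \<omega>) \<omega>
          = a0 i + (\<Sum>k\<in>UNIV. a i $ k * (column k B \<bullet> X \<omega>))" for i
  proof -
    have "\<exists>(a :: real^'k). AE \<omega> in M.
        real_cond_exp M F (\<lambda>\<omega>. axis i 1 \<bullet> X \<omega>) \<omega>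
          = a0 i + (\<Sum>k\<in>UNIV. a $ k * (column k B \<bullet> X \<omega>))"
      unfolding a0_def by (rule someI_ex[OF ex[of i]])
    then show ?thesis unfolding a_def by (rule someI_ex)
  qed
  define D :: "real^'k^'p" where "D = (\<chi> i k. a i $ k)"
  define q where "q = (\<lambda>i. axis i 1 - (\<Sum>k\<in>UNIV. D $ i $ k *\<^sub>R column k B))"
  define r where "r = (\<lambda>i (x::real^'p). - a0 i + q i \<bullet> x)"
  have r_alt: "r i x = x $ i - (a0 i + (\<Sum>k\<in>UNIV. a i $ k * (column k B \<bullet> x)))" for i x
    unfolding r_def q_def D_def by (simp add: inner_diff_left inner_sum_left inner_axis')
  have rm[measurable]: "r i \<in> borel_measurable borel" for i unfolding r_def by measurable
  have ce: "AE \<omega> in M. real_cond_exp M F (\<lambda>\<omega>. r i (X \<omega>)) \<omega> = 0" for i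
  proof -
    interpret sigma_finite_subalgebra M F unfolding F_def
      by (rule gen_sigma_sub[OF \<open>prob_space M\<close>]) (rule measurable_compose[OF X_meas Tm[unfolded T_def]])
    define \<phi> where "\<phi> = (\<lambda>\<omega>. a0 i + (\<Sum>k\<in>UNIV. a i $ k * (column k B \<bullet> X \<omega>)))"
    have \<phi>int: "integrable M \<phi>"
    proof -
      have "\<phi> = (\<lambda>\<omega>. a0 i + (\<Sum>k\<in>UNIV. a i $ k *\<^sub>R column k B) \<bullet> X \<omega>)"
        unfolding \<phi>_def by (simp add: inner_sum_left)
      then show ?thesis using intL by simp
    qed
    have \<phi>F: "\<phi> \<in> borel_measurable F"
    proof -
      have "(\<lambda>z. a0 i + (\<Sum>k\<in>UNIV. a i $ k * z $ k)) \<circ> (\<lambda>\<omega>. transpose B *v X \<omega>) \<in> borel_measurable F"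
        unfolding F_def gen_sigma_def
        by (rule measurable_comp[OF measurable_vimage_algebra1]) (auto simp: measurable_space)
      then show ?thesis unfolding \<phi>_def o_def colT T_def by simp
    qed
    have e1: "(\<lambda>\<omega>. r i (X \<omega>)) = (\<lambda>\<omega>. X \<omega> $ i - \<phi> \<omega>)" unfolding r_alt \<phi>_def by simp
    have e2: "(\<lambda>\<omega>. axis i 1 \<bullet> X \<omega>) = (\<lambda>\<omega>. X \<omega> $ i)" by (simp add: inner_axis')
    have "AE \<omega> in M. real_cond_exp M F (\<lambda>\<omega>. X \<omega> $ i - \<phi> \<omega>) \<omega>
        = real_cond_exp M F (\<lambda>\<omega>. X \<omega> $ i) \<omega> - real_cond_exp M F \<phi> \<omega>"
      by (rule real_cond_exp_diff[OF intX \<phi>int])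
    moreover have "AE \<omega> in M. real_cond_exp M F \<phi> \<omega> = \<phi> \<omega>"
      by (rule real_cond_exp_F_meas[OF \<phi>int \<phi>F])
    moreover have "AE \<omega> in M. real_cond_exp M F (\<lambda>\<omega>. X \<omega> $ i) \<omega> = \<phi> \<omega>"
      using LDC'[of i] unfolding e2 \<phi>_def .
    ultimately show ?thesis unfolding e1 by eventually_elim simp
  qed
  have ind_eq: "indicator A \<omega> = indicator S (f (transpose B *v X \<omega>, \<epsilon> \<omega>))" if "\<omega> \<in> space M" for \<omega>
    using that by (simp add: A_def model indicator_def)
  have Kgen: "cond_mean_event M A (\<lambda>\<omega>. r i (X \<omega>) * h \<omega>) = 0"
    if gm: "g \<in> borel_measurable borel" and hi: "iA M A (\<lambda>\<omega>. r i (X \<omega>) * h \<omega>)"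
      and eq: "\<And>\<omega>. \<omega> \<in> space M \<Longrightarrow> r i (X \<omega>) * g (transpose B *v X \<omega>, \<epsilon> \<omega>) = indicator A \<omega> * (r i (X \<omega>) * h \<omega>)"
    for i g h
  proof -
    have int: "integrable M (\<lambda>\<omega>. r i (X \<omega>) * g (transpose B *v X \<omega>, \<epsilon> \<omega>))"
      using hi unfolding iA_def by (subst Bochner_Integration.integrable_cong[OF refl eq]) auto
    have "(\<integral>\<omega>. r i (X \<omega>) * g (transpose B *v X \<omega>, \<epsilon> \<omega>) \<partial>M) = 0"
      by (rule indep_zero[where T="\<lambda>x. transpose B *v x", OF \<open>prob_space M\<close> X_meas eps_meas indep _ rm
            ce[unfolded F_def] gm int]) (use Tm in \<open>simp add: T_def\<close>)
    then have "(\<integral>\<omega>. indicator A \<omega> * (r i (X \<omega>) * h \<omega>) \<partial>M) = 0"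
      by (subst (asm) Bochner_Integration.integral_cong[OF refl eq]) auto
    then show ?thesis unfolding cond_mean_event_def by simp
  qed
  have g1m: "(\<lambda>p. indicator S (f p) :: real) \<in> borel_measurable borel"
    by (rule measurable_compose[OF f_meas borel_measurable_indicator[OF S_borel]])
  have g2m: "(\<lambda>p. indicator S (f p) * f p :: real) \<in> borel_measurable borel"
    using g1m f_meas by (rule borel_measurable_times)
  have g3m: "(\<lambda>p. indicator S (f p) * (fst p $ l) :: real) \<in> borel_measurable borel" for l
  proof -
    have "(\<lambda>p::((real^'k) \<times> real). fst p $ l) \<in> borel_measurable (borel \<Otimes>\<^sub>M borel)" by measurable
    then have "(\<lambda>p::((real^'k) \<times> real). fst p $ l) \<in> borel_measurable borel" by (simp add: borel_prod)
    with g1m show ?thesis by (rule borel_measurable_times)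
  qed
  have E0: "cond_mean_event M A (\<lambda>\<omega>. r i (X \<omega>)) = 0" for i
  proof -
    have "cond_mean_event M A (\<lambda>\<omega>. r i (X \<omega>) * 1) = 0"
    proof (rule Kgen[OF g1m])
      show "iA M A (\<lambda>\<omega>. r i (X \<omega>) * 1)"
        using iLL[of "- a0 i" "q i" 1 0] by (simp add: r_def)
    qed (simp add: ind_eq)
    then show ?thesis by simp
  qed
  have EY: "cond_mean_event M A (\<lambda>\<omega>. r i (X \<omega>) * Y \<omega>) = 0" for i
  proof (rule Kgen[OF g2m])
    show "iA M A (\<lambda>\<omega>. r i (X \<omega>) * Y \<omega>)"
      using iLY[of "- a0 i" "q i" 0 1] by (simp add: r_def)
  qed (simp add: ind_eq model)
  have EZ: "cond_mean_event M A (\<lambda>\<omega>. r i (X \<omega>) * (column l B \<bullet> X \<omega>)) = 0" for i l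
  proof (rule Kgen[OF g3m[of l]])
    show "iA M A (\<lambda>\<omega>. r i (X \<omega>) * (column l B \<bullet> X \<omega>))"
      using iLL[of "- a0 i" "q i" 0 "column l B"] by (simp add: r_def)
  qed (simp add: ind_eq colT T_def)
  define m :: "real^'p" where "m = (\<chi> j. cond_mean_event M A (\<lambda>\<omega>. X \<omega> $ j))"
  define \<mu> where "\<mu> = cond_mean_event M A Y"
  define V where "V = cond_var_event M A X"
  define C where "C = cond_cov_event M A X Y"
  have iC: "iA M A (\<lambda>\<omega>. c)" for c using iA_cmult[OF i1, of c] by simp
  have B0: "cond_mean_event M A (\<lambda>\<omega>. c + v \<bullet> X \<omega>) = c + v \<bullet> m" for c v
  proof -
    have "cond_mean_event M A (\<lambda>\<omega>. c + (\<Sum>j\<in>UNIV. v $ j * X \<omega> $ j)) = c + (\<Sum>j\<in>UNIV. v $ j * m $ j)"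
      by (subst En_add[OF iC iA_sum[OF iA_cmult[OF iX]]], subst En_sum, simp, rule iA_cmult[OF iX])
        (simp add: En_cmult En_const[OF Asets Apos] m_def)
    then show ?thesis by (simp add: inner_vec_def)
  qed
  have rmean: "q i \<bullet> m = a0 i" for i
    using E0[of i] B0[of "- a0 i" "q i"] unfolding r_def by simp
  have Vij: "V $ i $ j = cond_mean_event M A (\<lambda>\<omega>. (X \<omega> $ i - m $ i) * (X \<omega> $ j - m $ j))" for i j
    unfolding V_def cond_var_event_def m_def by simp
  have Ci: "C $ i = cond_mean_event M A (\<lambda>\<omega>. (Y \<omega> - \<mu>) * (X \<omega> $ i - m $ i))" for i
    unfolding C_def cond_cov_event_def m_def \<mu>_def by simp
  have iXc: "iA M A (\<lambda>\<omega>. (X \<omega> $ i - m $ i) * (X \<omega> $ j - m $ j))" for i j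
    using iLL[of "- m $ i" "axis i 1" "- m $ j" "axis j 1"] by (simp add: inner_axis')
  have iYc: "iA M A (\<lambda>\<omega>. (Y \<omega> - \<mu>) * (X \<omega> $ j - m $ j))" for j
    using iLY[of "- m $ j" "axis j 1" "- \<mu>" 1] by (simp add: inner_axis' mult.commute)
  have B1: "v \<bullet> (V *v w) = cond_mean_event M A (\<lambda>\<omega>. (v \<bullet> (X \<omega> - m)) * (w \<bullet> (X \<omega> - m)))" for v w
  proof -
    have "v \<bullet> (V *v w) = (\<Sum>i\<in>UNIV. \<Sum>j\<in>UNIV. cond_mean_event M A (\<lambda>\<omega>. (v $ i * w $ j) * ((X \<omega> $ i - m $ i) * (X \<omega> $ j - m $ j))))"
      unfolding inner_vec_def matrix_vector_mult_def En_cmult Vij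
      by (simp add: sum_distrib_left mult_ac)
    also have "\<dots> = cond_mean_event M A (\<lambda>\<omega>. \<Sum>i\<in>UNIV. \<Sum>j\<in>UNIV. (v $ i * w $ j) * ((X \<omega> $ i - m $ i) * (X \<omega> $ j - m $ j)))"
    proof -
      have inner: "cond_mean_event M A (\<lambda>\<omega>. \<Sum>j\<in>UNIV. (v $ i * w $ j) * ((X \<omega> $ i - m $ i) * (X \<omega> $ j - m $ j)))
          = (\<Sum>j\<in>UNIV. cond_mean_event M A (\<lambda>\<omega>. (v $ i * w $ j) * ((X \<omega> $ i - m $ i) * (X \<omega> $ j - m $ j))))" for i
        by (rule En_sum) (auto intro!: iA_cmult iXc)
      show ?thesis by (subst En_sum) (auto intro!: iA_sum iA_cmult iXc simp: inner)
    qed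
    also have "\<dots> = cond_mean_event M A (\<lambda>\<omega>. (v \<bullet> (X \<omega> - m)) * (w \<bullet> (X \<omega> - m)))"
      unfolding inner_vec_def sum_product by (simp add: mult_ac)
    finally show ?thesis .
  qed
  have B2: "w \<bullet> C = cond_mean_event M A (\<lambda>\<omega>. (Y \<omega> - \<mu>) * (w \<bullet> (X \<omega> - m)))" for w
  proof -
    have "w \<bullet> C = (\<Sum>j\<in>UNIV. cond_mean_event M A (\<lambda>\<omega>. w $ j * ((Y \<omega> - \<mu>) * (X \<omega> $ j - m $ j))))"
      unfolding inner_vec_def En_cmult Ci by simp
    also have "\<dots> = cond_mean_event M A (\<lambda>\<omega>. \<Sum>j\<in>UNIV. w $ j * ((Y \<omega> - \<mu>) * (X \<omega> $ j - m $ j)))"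
      by (subst En_sum) (auto intro!: iA_cmult iYc)
    also have "\<dots> = cond_mean_event M A (\<lambda>\<omega>. (Y \<omega> - \<mu>) * (w \<bullet> (X \<omega> - m)))"
      unfolding inner_vec_def sum_distrib_left by (simp add: mult_ac)
    finally show ?thesis .
  qed
  have qX: "q i \<bullet> (X \<omega> - m) = r i (X \<omega>)" for i \<omega>
    using rmean[of i] by (simp add: r_def inner_diff_right)
  have N1: "q i \<bullet> (V *v column l B) = 0" for i l
  proof -
    have "q i \<bullet> (V *v column l B) = cond_mean_event M A (\<lambda>\<omega>. r i (X \<omega>) * (column l B \<bullet> X \<omega>) - (column l B \<bullet> m) * r i (X \<omega>))"
      unfolding B1 qX by (simp add: inner_diff_right algebra_simps)
    also have "\<dots> = 0"
      apply (subst En_diff)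
      subgoal using iLL[of "- a0 i" "q i" 0 "column l B"] by (simp add: r_def)
      subgoal using iA_cmult[OF iLL[of "- a0 i" "q i" 1 0], of "column l B \<bullet> m"] by (simp add: r_def)
      by (simp add: En_cmult EZ E0)
    finally show ?thesis .
  qed
  have N2: "q i \<bullet> C = 0" for i
  proof -
    have "q i \<bullet> C = cond_mean_event M A (\<lambda>\<omega>. r i (X \<omega>) * Y \<omega> - \<mu> * r i (X \<omega>))"
      unfolding B2 qX by (simp add: algebra_simps)
    also have "\<dots> = 0"
      apply (subst En_diff)
      subgoal using iLY[of "- a0 i" "q i" 0 1] by (simp add: r_def)
      subgoal using iA_cmult[OF iLL[of "- a0 i" "q i" 1 0], of "\<mu>"] by (simp add: r_def)
      by (simp add: En_cmult EY E0)
    finally show ?thesis .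
  qed
  have psd: "v \<bullet> (V *v v) \<ge> 0" for v
    unfolding B1 by (rule En_nonneg) simp
  have sym: "transpose V = V"
    by (simp add: vec_eq_iff transpose_def Vij mult.commute)
  have invV: "invertible V" using V_S_inv unfolding V_def A_def .
  have "matrix_inv V *v C \<in> span (columns B)"
    by (rule linalg[OF invV sym psd B_rank _ N1 N2]) (simp add: q_def)
  then show ?thesis unfolding V_def C_def A_def .
qed

end
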